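(* Let $\mathfrak{A}=(S_\Omega,S_{\mathcal E},\Omega,\mathcal E,B,u)$ be an accessible GPT fragment, and let $H_\Omega:S_\Omega\to\mathbb R^n$ and $H_{\mathcal E}:S_{\mathcal E}^*\to\mathbb R^m$ be its facet maps. Then $\mathfrak A$ admits a simplicial-cone embedding if and only if there exists a real $m\times n$ matrix $\sigma$ with all entries nonnegative such that $$B(w,v)=H_{\mathcal E}(w)^T\,\sigma\,H_\Omega(v)\qquad\text{for all } w\in S_{\mathcal E}^*,\ v\in S_\Omega .$$ In the quantum case ($S_\Omega,S_{\mathcal E}$ subspaces of the Hermitian operators on a finite-dimensional Hilbert space $\mathcal H$, spanned respectively by a finite set $\Omega$ of positive semidefinite operators and a finite set $\mathcal E$ of operators $0\le E\le \mathbb 1$, with effects acting by the trace pairing and $B(w,v)=\mathrm{tr}(wv)$), this condition reads $I_{\mathcal E}^T I_\Omega=H_{\mathcal E}^T\sigma H_\Omega$ in matrix form, where $I_\Omega,I_{\mathcal E}$ are the inclusion maps of $S_\Omega,S_{\mathcal E}$ into the space of Hermitian operators (expressed in bases orthonormal for the Hilbert–Schmidt inner product).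
   Context: An accessible GPT fragment $\mathfrak A=(S_\Omega,S_{\mathcal E},\Omega,\mathcal E,B,u)$ consists of: finite-dimensional real vector spaces $S_\Omega$ and $S_{\mathcal E}$; a set $\Omega\subset S_\Omega$ of states which spans $S_\Omega$; a set $\mathcal E\subset S_{\mathcal E}^*$ of effects which spans $S_{\mathcal E}^*$; a bilinear form $B:S_{\mathcal E}^*\times S_\Omega\to\mathbb R$ (the probability rule, the probability of effect $e$ on state $s$ being $B(e,s)$); and a unit effect $u\in\mathcal E$. The convex hulls of $\Omega$ and of $\mathcal E$ are assumed to have finitely many extreme points. $\mathrm{Cone}[\Omega]=\{\sum_\alpha r_\alpha s_\alpha: s_\alpha\in\Omega, r_\alpha\ge0\}$, and similarly $\mathrm{Cone}[\mathcal E]$; these are polyhedral cones. The dual cone $\mathrm{Cone}[\Omega]^*=\{h\in S_\Omega^*: h(v)\ge 0\ \forall v\in\mathrm{Cone}[\Omega]\}$ and $\mathrm{Cone}[\mathcal E]^*=\{g\in S_{\mathcal E}: w(g)\ge0\ \forall w\in\mathrm{Cone}[\mathcal E]\}$ (identifying $S_{\mathcal E}^{**}=S_{\mathcal E}$). Facet maps: let $h_1,\dots,h_n\in S_\Omega^*$ be one representative of each extreme ray of $\mathrm{Cone}[\Omega]^*$ (equivalently, the facet inequalities of $\mathrm{Cone}[\Omega]$), and define $H_\Omega(v)=(h_1(v),\dots,h_n(v))^T$; let $g_1,\dots,g_m\in S_{\mathcal E}$ be one representative of each extreme ray of $\mathrm{Cone}[\mathcal E]^*$, and define $H_{\mathcal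 E}(w)=(w(g_1),\dots,w(g_m))^T$. Thus $H_\Omega(v)\ge_e0$ iff $v\in\mathrm{Cone}[\Omega]$ and $H_{\mathcal E}(w)\ge_e 0$ iff $w\in\mathrm{Cone}[\mathcal E]$, where $\ge_e$ denotes entrywise nonnegativity. A simplicial-cone embedding of $\mathfrak A$ is a finite set $\Lambda$ together with linear maps $\tau_\Omega:S_\Omega\to\mathbb R^\Lambda$ and $\tau_{\mathcal E}:S_{\mathcal E}^*\to\mathbb R^\Lambda$ such that $\tau_\Omega(s)\ge_e 0$ for all $s\in\Omega$, $\tau_{\mathcal E}(e)\ge_e0$ for all $e\in\mathcal E$, and $B(w,v)=\tau_{\mathcal E}(w)\cdot\tau_\Omega(v)$ (standard dot product on $\mathbb R^\Lambda$) for all $w\in S_{\mathcal E}^*$, $v\in S_\Omega$. A simplex embedding is a simplicial-cone embedding which additionally satisfies $\tau_{\mathcal E}(u)=(1,1,\dots,1)$. (A scenario is called classically explainable when it admits a simplex embedding.) *)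

theory Defs
  imports "HOL-Analysis.Analysis"
begin

text \<open>The state space S_Omega is modelled by a finite-dimensional real vector space type 'a,
  the effect space S_E^* by a type 'b. Linear functionals on them are functions to real
  that are linear.\<close>

definition gpt_cone :: "'a::real_vector set \<Rightarrow> 'a set" where
  "gpt_cone X = convex_cone hull X"

definition dual_cone :: "'a::real_vector set \<Rightarrow> ('a \<Rightarrow> real) set" where
  "dual_cone X = {h. linear h \<and> (\<forall>v\<in>gpt_cone X. 0 \<le> h v)}"

definition extreme_ray_gen :: "('a \<Rightarrow> real) set \<Rightarrow> ('a \<Rightarrow> real) \<Rightarrow> bool" where
  "extreme_ray_gen C h \<longleftrightarrow> h \<in> C \<and> h \<noteq> (\<lambda>x. 0) \<and>
     (\<forall>h1\<in>C. \<forall>h2\<in>C. (\<forall>x. h x = h1 x + h2 x) \<longrightarrow> (\<exists>c\<ge>0. \<forall>x. h1 x = c * h x))"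

text \<open>Facet map: a list containing exactly one representative of each extreme ray of
  the dual cone of Cone[X]; the facet map is v \<mapsto> (hs!0 v, ..., hs!(n-1) v).\<close>
definition facet_map :: "'a::real_vector set \<Rightarrow> ('a \<Rightarrow> real) list \<Rightarrow> bool" where
  "facet_map X hs \<longleftrightarrow>
     (\<forall>i<length hs. extreme_ray_gen (dual_cone X) (hs ! i)) \<and>
     (\<forall>i<length hs. \<forall>j<length hs. i \<noteq> j \<longrightarrow>
         \<not> (\<exists>c>0. \<forall>x. (hs ! i) x = c * (hs ! j) x)) \<and>
     (\<forall>h. extreme_ray_gen (dual_cone X) h \<longrightarrow>
         (\<exists>i<length hs. \<exists>c>0. \<forall>x. h x = c * (hs ! i) x))"

definition accessible_gpt_fragment ::
  "'a::euclidean_space set \<Rightarrow> 'b::euclidean_space set \<Rightarrow> ('b \<Rightarrow> 'a \<Rightarrow> real) \<Rightarrow> 'b \<Rightarrow> bool" where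
  "accessible_gpt_fragment \<Omega> \<E> B u \<longleftrightarrow>
     span \<Omega> = UNIV \<and> span \<E> = UNIV \<and> bilinear B \<and> u \<in> \<E> \<and>
     polytope (convex hull \<Omega>) \<and> polytope (convex hull \<E>)"

definition simplicial_cone_embedding ::
  "'a::real_vector set \<Rightarrow> 'b::real_vector set \<Rightarrow> ('b \<Rightarrow> 'a \<Rightarrow> real) \<Rightarrow>
   nat \<Rightarrow> ('a \<Rightarrow> nat \<Rightarrow> real) \<Rightarrow> ('b \<Rightarrow> nat \<Rightarrow> real) \<Rightarrow> bool" where
  "simplicial_cone_embedding \<Omega> \<E> B k \<tau>\<Omega> \<tau>\<E> \<longleftrightarrow>
     (\<forall>l<k. linear (\<lambda>v. \<tau>\<Omega> v l)) \<and> (\<forall>l<k. linear (\<lambda>w. \<tau>\<E> w l)) \<and>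
     (\<forall>s\<in>\<Omega>. \<forall>l<k. 0 \<le> \<tau>\<Omega> s l) \<and> (\<forall>e\<in>\<E>. \<forall>l<k. 0 \<le> \<tau>\<E> e l) \<and>
     (\<forall>w v. B w v = (\<Sum>l<k. \<tau>\<E> w l * \<tau>\<Omega> v l))"

definition admits_simplicial_cone_embedding ::
  "'a::real_vector set \<Rightarrow> 'b::real_vector set \<Rightarrow> ('b \<Rightarrow> 'a \<Rightarrow> real) \<Rightarrow> bool" where
  "admits_simplicial_cone_embedding \<Omega> \<E> B \<longleftrightarrow>
     (\<exists>k \<tau>\<Omega> \<tau>\<E>. simplicial_cone_embedding \<Omega> \<E> B k \<tau>\<Omega> \<tau>\<E>)"

end

theory Submission
  imports Defs
begin

lemma riesz:
  fixes h :: "'a::euclidean_space \<Rightarrow> real"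
  assumes "linear h"
  shows "\<exists>a. \<forall>x. h x = a \<bullet> x"
proof (intro exI allI)
  fix x :: 'a
  have "h x = h (\<Sum>b\<in>Basis. (x \<bullet> b) *\<^sub>R b)" by (simp add: euclidean_representation)
  also have "\<dots> = (\<Sum>b\<in>Basis. (x \<bullet> b) * h b)"
    using assms by (simp add: linear_sum linear_scale)
  also have "\<dots> = (\<Sum>b\<in>Basis. h b *\<^sub>R b) \<bullet> x"
    by (simp add: inner_sum_right inner_commute mult.commute)
  finally show "h x = (\<Sum>b\<in>Basis. h b *\<^sub>R b) \<bullet> x" .
qed

lemma linear_inner: "linear (\<lambda>x. (a::'a::real_inner) \<bullet> x)"
  by (simp add: bounded_linear_inner_right bounded_linear.linear)

lemma cone_sub:
  fixes X :: "'a::real_vector set" and f :: "'a \<Rightarrow> real"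
  assumes "linear f" "\<forall>x\<in>X. 0 \<le> f x"
  shows "\<forall>v\<in>gpt_cone X. 0 \<le> f v"
proof -
  have "convex_cone {v. 0 \<le> f v}"
    using assms(1) unfolding convex_cone_iff
    by (auto simp: linear_add linear_scale linear_0)
  hence "gpt_cone X \<subseteq> {v. 0 \<le> f v}"
    unfolding gpt_cone_def using assms(2) by (intro hull_minimal) auto
  thus ?thesis by auto
qed

lemma dual_cone_iff:
  fixes X :: "'a::real_vector set"
  shows "f \<in> dual_cone X \<longleftrightarrow> linear f \<and> (\<forall>x\<in>X. 0 \<le> f x)"
  unfolding dual_cone_def using cone_sub[of f X] 
  by (auto simp: gpt_cone_def hull_inc)

lemma basis_pos:
  fixes X :: "'a::euclidean_space set"
  assumes "span X = UNIV"
  obtains c where "\<And>a. \<forall>x\<in>X. 0 \<le> a \<bullet> x \<Longrightarrow> 0 \<le> a \<bullet> c"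
     "\<And>a. \<forall>x\<in>X. 0 \<le> a \<bullet> x \<Longrightarrow> a \<bullet> c = 0 \<Longrightarrow> a = 0"
proof -
  obtain Bs where Bs: "Bs \<subseteq> X" "independent Bs" "X \<subseteq> span Bs"
    using basis_exists by blast
  have fin: "finite Bs" using Bs(2) independent_bound_general by blast
  have spB: "span Bs = UNIV" using Bs(3) assms
    using span_mono[OF Bs(3)] by (simp add: span_span top_unique)
  show ?thesis
  proof (rule that[of "\<Sum>Bs"])
    fix a :: 'a assume a: "\<forall>x\<in>X. 0 \<le> a \<bullet> x"
    show "0 \<le> a \<bullet> \<Sum>Bs" using a Bs(1) by (auto simp: inner_sum_right intro: sum_nonneg)
    assume "a \<bullet> \<Sum>Bs = 0"
    hence "\<forall>b\<in>Bs. a \<bullet> b = 0" using a Bs(1) fin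
      by (subst sum_nonneg_eq_0_iff[symmetric]) (auto simp: inner_sum_right)
    hence "orthogonal a a" using orthogonal_to_span[of a Bs a] spB
      by (auto simp: orthogonal_def)
    thus "a = 0" by (simp add: orthogonal_def)
  qed
qed

lemma dual_gen:
  fixes X :: "'a::euclidean_space set" and h :: "'a \<Rightarrow> real"
  assumes span: "span X = UNIV" and fm: "facet_map X hs" and h: "h \<in> dual_cone X"
  shows "\<exists>lam. (\<forall>j<length hs. 0 \<le> lam j) \<and> (\<forall>x. h x = (\<Sum>j<length hs. lam j * (hs!j) x))"
proof -
  define n where "n = length hs"
  define K where "K = {a::'a. \<forall>x\<in>X. 0 \<le> a \<bullet> x}"
  define Q where "Q = {a::'a. \<exists>lam. (\<forall>j<n. 0 \<le> lam j) \<and> (\<forall>x. a \<bullet> x = (\<Sum>j<n. lam j * (hs!j) x))}"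
  obtain c where c1': "\<And>a. \<forall>x\<in>X. 0 \<le> a \<bullet> x \<Longrightarrow> 0 \<le> a \<bullet> c"
     and c2': "\<And>a. \<forall>x\<in>X. 0 \<le> a \<bullet> x \<Longrightarrow> a \<bullet> c = 0 \<Longrightarrow> a = 0"
    using basis_pos[OF span] by blast
  have c1: "\<And>a. a \<in> K \<Longrightarrow> 0 \<le> a \<bullet> c" using c1' unfolding K_def by blast
  have c2: "\<And>a. a \<in> K \<Longrightarrow> a \<bullet> c = 0 \<Longrightarrow> a = 0" using c2' unfolding K_def by blast
  have Kdual: "(\<lambda>x. a \<bullet> x) \<in> dual_cone X \<longleftrightarrow> a \<in> K" for a
    by (simp add: dual_cone_iff K_def linear_inner)
  have convQ: "convex_cone Q"
    unfolding convex_cone_iff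
  proof (intro conjI ballI allI impI)
    show "0 \<in> Q" unfolding Q_def by (intro CollectI exI[of _ "\<lambda>_. 0"]) simp
  next
    fix x y assume "x \<in> Q" "y \<in> Q"
    then obtain lam1 lam2 where l1: "\<forall>j<n. 0 \<le> lam1 j" "\<forall>z. x \<bullet> z = (\<Sum>j<n. lam1 j * (hs!j) z)"
      and l2: "\<forall>j<n. 0 \<le> lam2 j" "\<forall>z. y \<bullet> z = (\<Sum>j<n. lam2 j * (hs!j) z)"
      unfolding Q_def by blast
    show "x + y \<in> Q" unfolding Q_def
      using l1 l2 by (intro CollectI exI[of _ "\<lambda>j. lam1 j + lam2 j"])
        (simp add: inner_add_left distrib_right sum.distrib)
  next
    fix x and t :: real assume "x \<in> Q" "0 \<le> t"
    then obtain lam1 where l1: "\<forall>j<n. 0 \<le> lam1 j" "\<forall>z. x \<bullet> z = (\<Sum>j<n. lam1 j * (hs!j) z)"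
      unfolding Q_def by blast
    show "t *\<^sub>R x \<in> Q" unfolding Q_def
      using l1 \<open>0 \<le> t\<close> by (intro CollectI exI[of _ "\<lambda>j. t * lam1 j"])
        (simp add: sum_distrib_left mult.assoc)
  qed
  have closedK: "closed K"
  proof -
    have "K = (\<Inter>x\<in>X. {a. inner x a \<ge> 0})" unfolding K_def by (auto simp: inner_commute)
    thus ?thesis by (auto intro: closed_halfspace_ge)
  qed
  have convK: "convex K" unfolding K_def convex_def
    by (auto simp: inner_add_left intro!: add_nonneg_nonneg mult_nonneg_nonneg)
  have coneK: "a \<in> K \<Longrightarrow> 0 \<le> t \<Longrightarrow> t *\<^sub>R a \<in> K" for a t
    unfolding K_def by auto
  obtain \<epsilon> where eps: "\<epsilon> > 0" "\<And>a. a \<in> K \<Longrightarrow> \<epsilon> * norm a \<le> a \<bullet> c"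
  proof (cases "K \<inter> sphere 0 1 = {}")
    case True
    have "a \<in> K \<Longrightarrow> a = 0" for a
    proof (rule ccontr)
      assume "a \<in> K" "a \<noteq> 0"
      hence "(1 / norm a) *\<^sub>R a \<in> K \<inter> sphere 0 1" using coneK by auto
      thus False using True by blast
    qed
    hence K0: "a \<in> K \<Longrightarrow> a = 0" for a by blast
    show ?thesis
    proof (rule that[of 1])
      fix a assume "a \<in> K"
      hence "a = 0" by (rule K0)
      thus "1 * norm a \<le> a \<bullet> c" by simp
    qed simp
  next
    case False
    have cpt: "compact (K \<inter> sphere 0 1)"
      using closedK by (simp add: closed_Int_compact compact_sphere)
    have cont: "continuous_on (K \<inter> sphere 0 1) (\<lambda>a. a \<bullet> c)"
      by (intro continuous_intros)
    obtain m where m: "m \<in> K \<inter> sphere 0 1" "\<And>y. y \<in> K \<inter> sphere 0 1 \<Longrightarrow> m \<bullet> c \<le> y \<bullet> c"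
      using continuous_attains_inf[OF cpt False cont] by blast
    have "m \<noteq> 0" using m(1) by auto
    have mK: "m \<in> K" using m(1) by blast
    have "m \<bullet> c \<noteq> 0" using c2[OF mK] \<open>m \<noteq> 0\<close> by blast
    hence mpos: "m \<bullet> c > 0" using c1[OF mK] by simp
    show ?thesis
    proof (rule that[of "m \<bullet> c"])
      show "0 < m \<bullet> c" by fact
      fix a assume a: "a \<in> K"
      show "m \<bullet> c * norm a \<le> a \<bullet> c"
      proof (cases "a = 0")
        case False
        hence "(1 / norm a) *\<^sub>R a \<in> K \<inter> sphere 0 1" using coneK a by auto
        hence "m \<bullet> c \<le> (1 / norm a) * (a \<bullet> c)" using m(2) by fastforce
        thus ?thesis using False by (simp add: field_simps)
      qed simp
    qed
  qed
  define P where "P = K \<inter> {a. c \<bullet> a = 1}"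
  have compP: "compact P"
  proof -
    have "P \<subseteq> cball 0 (1 / \<epsilon>)"
    proof
      fix a assume "a \<in> P"
      hence "\<epsilon> * norm a \<le> 1" using eps(2)[of a] unfolding P_def by (auto simp: inner_commute)
      thus "a \<in> cball 0 (1 / \<epsilon>)" using eps(1) by (simp add: field_simps)
    qed
    hence "bounded P" using bounded_cball bounded_subset by blast
    moreover have "closed P" unfolding P_def using closedK closed_hyperplane by blast
    ultimately show ?thesis using compact_eq_bounded_closed by blast
  qed
  have convP: "convex P" unfolding P_def using convK convex_hyperplane convex_Int by blast
  have extQ: "e \<in> Q" if e: "e extreme_point_of P" for e
  proof -
    have eP: "e \<in> P" using e by (simp add: extreme_point_of_def)
    have ray: "extreme_ray_gen (dual_cone X) (\<lambda>x. e \<bullet> x)"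
      unfolding extreme_ray_gen_def
    proof (intro conjI ballI impI)
      show "(\<lambda>x. e \<bullet> x) \<in> dual_cone X" using eP Kdual P_def by auto
      show "(\<lambda>x. e \<bullet> x) \<noteq> (\<lambda>x. 0)"
      proof
        assume "(\<lambda>x. e \<bullet> x) = (\<lambda>x. 0)"
        hence "e \<bullet> c = 0" by meson
        thus False using eP P_def by (simp add: inner_commute)
      qed
      fix h1 h2 assume h1: "h1 \<in> dual_cone X" and h2: "h2 \<in> dual_cone X"
        and sum: "\<forall>x. e \<bullet> x = h1 x + h2 x"
      obtain a1 where a1: "\<forall>x. h1 x = a1 \<bullet> x" using riesz h1 dual_cone_iff by metis
      obtain a2 where a2: "\<forall>x. h2 x = a2 \<bullet> x" using riesz h2 dual_cone_iff by metis
      have "h1 = (\<lambda>x. a1 \<bullet> x)" using a1 by (simp add: fun_eq_iff)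
      hence a1K: "a1 \<in> K" using h1 Kdual by simp
      have "h2 = (\<lambda>x. a2 \<bullet> x)" using a2 by (simp add: fun_eq_iff)
      hence a2K: "a2 \<in> K" using h2 Kdual by simp
      have "\<forall>x. (e - a1 - a2) \<bullet> x = 0" using sum a1 a2 by (simp add: inner_diff_left)
      hence "(e - a1 - a2) \<bullet> (e - a1 - a2) = 0" by blast
      hence "e - a1 - a2 = 0" by simp
      hence esum: "e = a1 + a2" by (simp add: algebra_simps)
      define t where "t = a1 \<bullet> c"
      have t0: "0 \<le> t" using c1 a1K t_def by auto
      have ec: "e \<bullet> c = 1" using eP P_def by (simp add: inner_commute)
      have t1: "a2 \<bullet> c = 1 - t" using ec esum t_def by (simp add: inner_add_left)
      have "a1 = t *\<^sub>R e"
      proof (cases "t = 0")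
        case True thus ?thesis using c2 a1K t_def by simp
      next
        case tn0: False
        show ?thesis
        proof (cases "t = 1")
          case True
          hence "a2 = 0" using c2 a2K t1 by simp
          thus ?thesis using esum True by simp
        next
          case False
          have t1': "t < 1" using False t1 c1[OF a2K] by simp
          have tp: "0 < t" using t0 tn0 by simp
          define p1 where "p1 = (1 / t) *\<^sub>R a1"
          define p2 where "p2 = (1 / (1 - t)) *\<^sub>R a2"
          have p1P: "p1 \<in> P" unfolding P_def p1_def using coneK[OF a1K, of "1/t"] tp t_def
            by (simp add: inner_commute)
          have p2P: "p2 \<in> P" unfolding P_def p2_def using coneK[OF a2K, of "1/(1-t)"] t1' t1
            by (simp add: inner_commute)
          have ecomb: "e = (1 - t) *\<^sub>R p2 + t *\<^sub>R p1"
            using esum tp t1' by (simp add: p1_def p2_def)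
          show ?thesis
          proof (rule ccontr)
            assume ne: "a1 \<noteq> t *\<^sub>R e"
            have "p1 \<noteq> e" using ne tp by (auto simp: p1_def)
            moreover have "p2 \<noteq> e"
            proof
              assume "p2 = e"
              hence "a2 = (1 - t) *\<^sub>R e" using t1' by (auto simp: p2_def)
              hence "a1 = t *\<^sub>R e" using esum by (simp add: algebra_simps)
              thus False using ne by simp
            qed
            ultimately have "p2 \<noteq> p1" using ecomb by (auto simp: algebra_simps)
            hence "e \<in> open_segment p2 p1" using ecomb tp t1' by (auto simp: in_segment)
            thus False using e p1P p2P by (auto simp: extreme_point_of_def)
          qed
        qed
      qed
      thus "\<exists>c\<ge>0. \<forall>x. h1 x = c * (e \<bullet> x)" using t0 a1 by auto
    qed
    then obtain i d where i: "i < n" "d > 0" "\<forall>x. e \<bullet> x = d * (hs!i) x"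
      using fm unfolding facet_map_def n_def by blast
    show "e \<in> Q" unfolding Q_def
    proof (intro CollectI exI[of _ "\<lambda>j. if j = i then d else 0"] conjI allI impI)
      fix x
      have "(\<Sum>j<n. (if j = i then d else 0) * (hs!j) x) = (\<Sum>j<n. if j = i then d * (hs!j) x else 0)"
        by (rule sum.cong) auto
      also have "\<dots> = d * (hs!i) x" using i(1) by simp
      finally show "e \<bullet> x = (\<Sum>j<n. (if j = i then d else 0) * (hs!j) x)" using i(3) by simp
    qed (use i in auto)
  qed
  have PQ: "P \<subseteq> Q"
  proof -
    have "convex hull {x. x extreme_point_of P} \<subseteq> Q"
      using extQ convQ by (intro hull_minimal) (auto simp: convex_cone_def)
    thus ?thesis using Krein_Milman_Minkowski[OF compP convP] by simp
  qed
  obtain a where a: "\<forall>x. h x = a \<bullet> x" using riesz h dual_cone_iff by metis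
  have "h = (\<lambda>x. a \<bullet> x)" using a by (simp add: fun_eq_iff)
  hence aK: "a \<in> K" using h Kdual by simp
  have "a \<in> Q"
  proof (cases "a = 0")
    case True thus ?thesis using convQ convex_cone_contains_0 by blast
  next
    case False
    hence "a \<bullet> c \<noteq> 0" using c2[OF aK] by blast
    hence ac: "a \<bullet> c > 0" using c1[OF aK] by simp
    have "(1 / (a \<bullet> c)) *\<^sub>R a \<in> P" unfolding P_def using coneK[OF aK] ac
      by (simp add: inner_commute)
    hence q: "(1 / (a \<bullet> c)) *\<^sub>R a \<in> Q" using PQ by blast
    have mem: "(a \<bullet> c) *\<^sub>R ((1 / (a \<bullet> c)) *\<^sub>R a) \<in> Q"
      by (rule convex_cone_scaleR[OF convQ]) (use ac q in auto)
    have eq: "(a \<bullet> c) *\<^sub>R ((1 / (a \<bullet> c)) *\<^sub>R a) = a" using ac by simp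
    show ?thesis using mem unfolding eq .
  qed
  thus ?thesis using a unfolding Q_def n_def by auto
qed

lemma sum_divmod:
  fixes F :: "nat \<Rightarrow> nat \<Rightarrow> real"
  shows "(\<Sum>l<m*n. F (l div n) (l mod n)) = (\<Sum>i<m. \<Sum>j<n. F i j)"
proof -
  have "(\<Sum>l<m*n. F (l div n) (l mod n)) = (\<Sum>i<m. \<Sum>l\<in>{i*n..<i*n+n}. F (l div n) (l mod n))"
    by (rule sum.nat_group[symmetric])
  also have "\<dots> = (\<Sum>i<m. \<Sum>j<n. F i j)"
  proof (rule sum.cong[OF refl])
    fix i
    have "(\<Sum>l\<in>{i*n..<i*n+n}. F (l div n) (l mod n)) = (\<Sum>j\<in>{0..<n}. F ((j + i*n) div n) ((j + i*n) mod n))"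
      using sum.shift_bounds_nat_ivl[of "\<lambda>l. F (l div n) (l mod n)" 0 "i*n" n] by (simp add: add.commute)
    also have "\<dots> = (\<Sum>j<n. F i j)"
      by (rule sum.cong) (auto simp: atLeast0LessThan)
    finally show "(\<Sum>l\<in>{i*n..<i*n+n}. F (l div n) (l mod n)) = (\<Sum>j<n. F i j)" .
  qed
  finally show ?thesis .
qed

lemma linear_cmul_real:
  fixes f :: "'a::real_vector \<Rightarrow> real"
  assumes "linear f" shows "linear (\<lambda>x. c * f x)"
  using assms unfolding linear_iff by (simp add: algebra_simps)

theorem mainTheorem1:
  fixes \<Omega> :: "'a::euclidean_space set" and \<E> :: "'b::euclidean_space set"
    and B :: "'b \<Rightarrow> 'a \<Rightarrow> real" and u :: 'b
    and hs :: "('a \<Rightarrow> real) list" and gs :: "('b \<Rightarrow> real) list"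
  assumes "accessible_gpt_fragment \<Omega> \<E> B u"
    and "facet_map \<Omega> hs" and "facet_map \<E> gs"
  shows "admits_simplicial_cone_embedding \<Omega> \<E> B \<longleftrightarrow>
    (\<exists>\<sigma> :: nat \<Rightarrow> nat \<Rightarrow> real.
        (\<forall>i<length gs. \<forall>j<length hs. 0 \<le> \<sigma> i j) \<and>
        (\<forall>w v. B w v = (\<Sum>i<length gs. \<Sum>j<length hs. (gs ! i) w * \<sigma> i j * (hs ! j) v)))"
proof -
  define m where "m = length gs"
  define n where "n = length hs"
  have spO: "span \<Omega> = UNIV" and spE: "span \<E> = UNIV"
    using assms(1) by (auto simp: accessible_gpt_fragment_def)
  have hsd: "j < n \<Longrightarrow> hs!j \<in> dual_cone \<Omega>" for j
    using assms(2) by (auto simp: facet_map_def extreme_ray_gen_def n_def)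
  have gsd: "i < m \<Longrightarrow> gs!i \<in> dual_cone \<E>" for i
    using assms(3) by (auto simp: facet_map_def extreme_ray_gen_def m_def)
  show ?thesis
  proof
    assume "admits_simplicial_cone_embedding \<Omega> \<E> B"
    then obtain k \<tau>O \<tau>E where emb: "simplicial_cone_embedding \<Omega> \<E> B k \<tau>O \<tau>E"
      unfolding admits_simplicial_cone_embedding_def by blast
    have "\<forall>l\<in>{..<k}. \<exists>\<beta>. (\<forall>j<n. 0 \<le> \<beta> j) \<and> (\<forall>v. \<tau>O v l = (\<Sum>j<n. \<beta> j * (hs!j) v))"
    proof
      fix l assume "l \<in> {..<k}"
      hence "(\<lambda>v. \<tau>O v l) \<in> dual_cone \<Omega>" using emb
        by (auto simp: dual_cone_iff simplicial_cone_embedding_def)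
      thus "\<exists>\<beta>. (\<forall>j<n. 0 \<le> \<beta> j) \<and> (\<forall>v. \<tau>O v l = (\<Sum>j<n. \<beta> j * (hs!j) v))"
        using dual_gen[OF spO assms(2)] n_def by blast
    qed
    hence "\<exists>ff. \<forall>l\<in>{..<k}. (\<forall>j<n. 0 \<le> ff l j) \<and> (\<forall>v. \<tau>O v l = (\<Sum>j<n. ff l j * (hs!j) v))" by (rule bchoice)
    then obtain \<beta> where \<beta>: "\<forall>l\<in>{..<k}. (\<forall>j<n. 0 \<le> \<beta> l j) \<and> (\<forall>v. \<tau>O v l = (\<Sum>j<n. \<beta> l j * (hs!j) v))"
      by blast
    have "\<forall>l\<in>{..<k}. \<exists>\<alpha>. (\<forall>i<m. 0 \<le> \<alpha> i) \<and> (\<forall>w. \<tau>E w l = (\<Sum>i<m. \<alpha> i * (gs!i) w))"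
    proof
      fix l assume "l \<in> {..<k}"
      hence "(\<lambda>w. \<tau>E w l) \<in> dual_cone \<E>" using emb
        by (auto simp: dual_cone_iff simplicial_cone_embedding_def)
      thus "\<exists>\<alpha>. (\<forall>i<m. 0 \<le> \<alpha> i) \<and> (\<forall>w. \<tau>E w l = (\<Sum>i<m. \<alpha> i * (gs!i) w))"
        using dual_gen[OF spE assms(3)] m_def by blast
    qed
    hence "\<exists>ff. \<forall>l\<in>{..<k}. (\<forall>i<m. 0 \<le> ff l i) \<and> (\<forall>w. \<tau>E w l = (\<Sum>i<m. ff l i * (gs!i) w))" by (rule bchoice)
    then obtain \<alpha> where \<alpha>: "\<forall>l\<in>{..<k}. (\<forall>i<m. 0 \<le> \<alpha> l i) \<and> (\<forall>w. \<tau>E w l = (\<Sum>i<m. \<alpha> l i * (gs!i) w))"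
      by blast
    define \<sigma> where "\<sigma> i j = (\<Sum>l<k. \<alpha> l i * \<beta> l j)" for i j
    show "\<exists>\<sigma> :: nat \<Rightarrow> nat \<Rightarrow> real.
        (\<forall>i<length gs. \<forall>j<length hs. 0 \<le> \<sigma> i j) \<and>
        (\<forall>w v. B w v = (\<Sum>i<length gs. \<Sum>j<length hs. (gs ! i) w * \<sigma> i j * (hs ! j) v))"
    proof (intro exI[of _ \<sigma>] conjI allI impI)
      fix i j assume "i < length gs" "j < length hs"
      thus "0 \<le> \<sigma> i j" using \<alpha> \<beta> unfolding \<sigma>_def m_def n_def
        by (auto intro!: sum_nonneg mult_nonneg_nonneg)
    next
      fix w v
      have "B w v = (\<Sum>l<k. \<tau>E w l * \<tau>O v l)" using emb by (simp add: simplicial_cone_embedding_def)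
      also have "\<dots> = (\<Sum>l<k. (\<Sum>i<m. \<alpha> l i * (gs!i) w) * (\<Sum>j<n. \<beta> l j * (hs!j) v))"
        using \<alpha> \<beta> by (intro sum.cong) auto
      also have "\<dots> = (\<Sum>l<k. \<Sum>i<m. \<Sum>j<n. (gs!i) w * (\<alpha> l i * \<beta> l j) * (hs!j) v)"
        by (simp add: sum_product mult_ac)
      also have "\<dots> = (\<Sum>i<m. \<Sum>l<k. \<Sum>j<n. (gs!i) w * (\<alpha> l i * \<beta> l j) * (hs!j) v)"
        by (rule sum.swap)
      also have "\<dots> = (\<Sum>i<m. \<Sum>j<n. \<Sum>l<k. (gs!i) w * (\<alpha> l i * \<beta> l j) * (hs!j) v)"
        by (intro sum.cong refl sum.swap)
      also have "\<dots> = (\<Sum>i<m. \<Sum>j<n. (gs!i) w * \<sigma> i j * (hs!j) v)"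
        unfolding \<sigma>_def by (simp add: sum_distrib_left sum_distrib_right)
      finally show "B w v = (\<Sum>i<length gs. \<Sum>j<length hs. (gs ! i) w * \<sigma> i j * (hs ! j) v)"
        by (simp add: m_def n_def)
    qed
  next
    assume "\<exists>\<sigma> :: nat \<Rightarrow> nat \<Rightarrow> real.
        (\<forall>i<length gs. \<forall>j<length hs. 0 \<le> \<sigma> i j) \<and>
        (\<forall>w v. B w v = (\<Sum>i<length gs. \<Sum>j<length hs. (gs ! i) w * \<sigma> i j * (hs ! j) v))"
    then obtain \<sigma> :: "nat \<Rightarrow> nat \<Rightarrow> real" where s1: "\<forall>i<m. \<forall>j<n. 0 \<le> \<sigma> i j"
      and s2: "\<forall>w v. B w v = (\<Sum>i<m. \<Sum>j<n. (gs ! i) w * \<sigma> i j * (hs ! j) v)"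
      unfolding m_def n_def by blast
    define \<tau>O where "\<tau>O v l = \<sigma> (l div n) (l mod n) * (hs!(l mod n)) v" for v l
    define \<tau>E where "\<tau>E w l = (gs!(l div n)) w" for w l
    have idx: "l < m*n \<Longrightarrow> l div n < m \<and> l mod n < n" for l
    proof -
      assume l: "l < m*n"
      hence "n > 0" by (cases n) auto
      thus ?thesis using l by (simp add: less_mult_imp_div_less)
    qed
    have "simplicial_cone_embedding \<Omega> \<E> B (m*n) \<tau>O \<tau>E"
      unfolding simplicial_cone_embedding_def
    proof (intro conjI allI ballI impI)
      fix l assume "l < m*n"
      thus "linear (\<lambda>v. \<tau>O v l)" using idx hsd unfolding \<tau>O_def
        by (auto simp: dual_cone_iff intro: linear_cmul_real)
    next
      fix l assume "l < m*n"
      thus "linear (\<lambda>w. \<tau>E w l)" using idx gsd unfolding \<tau>E_def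
        by (auto simp: dual_cone_iff)
    next
      fix s l assume "s \<in> \<Omega>" "l < m*n"
      thus "0 \<le> \<tau>O s l" using idx[of l] hsd[of "l mod n"] s1 unfolding \<tau>O_def
        by (auto simp: dual_cone_iff)
    next
      fix e l assume "e \<in> \<E>" "l < m*n"
      thus "0 \<le> \<tau>E e l" using idx[of l] gsd[of "l div n"] unfolding \<tau>E_def
        by (auto simp: dual_cone_iff)
    next
      fix w v
      show "B w v = (\<Sum>l<m*n. \<tau>E w l * \<tau>O v l)"
        using s2 sum_divmod[where F="\<lambda>i j. (gs!i) w * (\<sigma> i j * (hs!j) v)" and m=m and n=n]
        unfolding \<tau>E_def \<tau>O_def by (simp add: mult_ac)
    qed
    thus "admits_simplicial_cone_embedding \<Omega> \<E> B"
      unfolding admits_simplicial_cone_embedding_def by blast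
  qed
qed

end
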